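(* Let $\mathbb{X},\mathbb{Y}$ be real Banach spaces and $T:\mathbb{X}\to\mathbb{Y}$ a bounded linear operator that preserves Birkhoff–James orthogonality at $u$ and at $v$, where $u,v\in S_{\mathbb{X}}$ lie on a common face $F$ of $B_{\mathbb{X}}$ which is supported by a functional $f\in S_{\mathbb{X}^*}$ (i.e. $f\equiv1$ on $F$). Then $\|Tu\|=\|Tv\|$.
   Context: $u\perp_B v$ means $\|u+\lambda v\|\ge\|u\|$ for all real $\lambda$; $T$ preserves Birkhoff–James orthogonality at $x$ if $x\perp_B w\Rightarrow Tx\perp_B Tw$ for all $w$. A convex subset $F$ of a convex set $G$ is a face of $G$ if whenever $a,b\in G$, $0<t<1$ and $(1-t)a+tb\in F$, then $a,b\in F$. $B_{\mathbb{X}}$, $S_{\mathbb{X}}$ denote the closed unit ball and unit sphere. *)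

theory Defs
  imports "HOL-Analysis.Analysis"
begin

definition bj_orth :: "'a::real_normed_vector \<Rightarrow> 'a \<Rightarrow> bool" where
  "bj_orth u v \<longleftrightarrow> (\<forall>l::real. norm (u + l *\<^sub>R v) \<ge> norm u)"

definition preserves_bj_at :: "('a::real_normed_vector \<Rightarrow> 'b::real_normed_vector) \<Rightarrow> 'a \<Rightarrow> bool" where
  "preserves_bj_at T x \<longleftrightarrow> (\<forall>w. bj_orth x w \<longrightarrow> bj_orth (T x) (T w))"

end

theory Submission
  imports Defs
begin

lemma aux:
  fixes T :: "'a::banach \<Rightarrow> 'b::banach" and f :: "'a \<Rightarrow>\<^sub>L real"
  assumes T: "bounded_linear T" and p: "preserves_bj_at T u"
    and nu: "norm u = 1" and nf: "norm f = 1"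
    and fu: "blinfun_apply f u = 1" and fv: "blinfun_apply f v = 1"
  shows "norm (T u) \<le> norm (T v)"
proof -
  have "bj_orth u (v - u)"
    unfolding bj_orth_def
  proof
    fix l :: real
    have "blinfun_apply f (u + l *\<^sub>R (v - u)) = 1"
      using fu fv by (simp add: blinfun.add_right blinfun.scaleR_right blinfun.diff_right)
    moreover have "blinfun_apply f (u + l *\<^sub>R (v - u)) \<le> norm (u + l *\<^sub>R (v - u))"
      using norm_blinfun[of f "u + l *\<^sub>R (v - u)"] nf
      by (metis abs_le_D1 mult_1 real_norm_def)
    ultimately show "norm u \<le> norm (u + l *\<^sub>R (v - u))" using nu by simp
  qed
  hence "bj_orth (T u) (T (v - u))" using p unfolding preserves_bj_at_def by blast
  hence "norm (T u) \<le> norm (T u + 1 *\<^sub>R T (v - u))" unfolding bj_orth_def by blast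
  also have "T u + 1 *\<^sub>R T (v - u) = T v"
    using T by (simp add: linear_simps)
  finally show ?thesis .
qed

theorem mainTheorem12:
  fixes T :: "'a::banach \<Rightarrow> 'b::banach"
    and u v :: 'a
    and F :: "'a set"
    and f :: "'a \<Rightarrow>\<^sub>L real"
  assumes "bounded_linear T"
    and "preserves_bj_at T u"
    and "preserves_bj_at T v"
    and "norm u = 1" and "norm v = 1"
    and "F face_of cball 0 1"
    and "u \<in> F" and "v \<in> F"
    and "norm f = 1"
    and "\<forall>x\<in>F. blinfun_apply f x = 1"
  shows "norm (T u) = norm (T v)"
  using aux[of T u f v] aux[of T v f u] assms by force

end
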